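(* Consider the switched system described in the context. For any $(\mathbf{x}_0,j_0)\in\mathbb{R}^3_+\times\mathcal{S}$ there exists a unique solution $(\mathbf{X}(t),\xi(t))_{t\ge0}$ of $\frac{dX_i}{dt}(t)=X_i(t)f_i(\mathbf{X}(t),\xi(t))$, $i=1,2,3$, with $(\mathbf{X}(0),\xi(0))=(\mathbf{x}_0,j_0)$ (defined for all $t\ge0$). There exists a compact set $\mathcal{K}\subset\mathbb{R}^3_+$ such that every nonnegative solution eventually enters $\mathcal{K}$ and then remains there forever. Moreover, if $\mathbf{X}(0)=\mathbf{x}_0\in\mathbb{R}^{3,\circ}_+=(0,\infty)^3$, then with probability one $\mathbf{X}(t)\in\mathbb{R}^{3,\circ}_+$ for all $t\ge0$.
   Context: Let $r,d,b_1,b_2>0$ and, for $j\in\mathcal{S}=\{1,2\}$, let $c_1(j),c_2(j),e_1(j),e_2(j)>0$. Let $\xi(t)$ be a continuous-time Markov chain on $\mathcal{S}$ switching from $1$ to $2$ at rate $q_{12}>0$ and from $2$ to $1$ at rate $q_{21}>0$. For $\mathbf{x}=(x_1,x_2,x_3)$, $j\in\mathcal{S}$ put $f_1(\mathbf{x},j)=r-x_1-b_1x_2-c_1(j)x_3$, $f_2(\mathbf{x},j)=r-x_2-b_2x_1-c_2(j)x_3$, $f_3(\mathbf{x},j)=e_1(j)x_1+e_2(j)x_2-d$. *)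

theory Defs
  imports "HOL-Analysis.Analysis"
begin

definition Sset :: "nat set" where "Sset = {1, 2}"

definition orthant :: "(real^3) set" where
  "orthant = {x. \<forall>i. 0 \<le> x $ i}"

definition orthant_int :: "(real^3) set" where
  "orthant_int = {x. \<forall>i. 0 < x $ i}"

definition f1 :: "real \<Rightarrow> real \<Rightarrow> (nat \<Rightarrow> real) \<Rightarrow> real^3 \<Rightarrow> nat \<Rightarrow> real" where
  "f1 r b1 c1 x j = r - x$1 - b1 * x$2 - c1 j * x$3"

definition f2 :: "real \<Rightarrow> real \<Rightarrow> (nat \<Rightarrow> real) \<Rightarrow> real^3 \<Rightarrow> nat \<Rightarrow> real" where
  "f2 r b2 c2 x j = r - x$2 - b2 * x$1 - c2 j * x$3"

definition f3 :: "real \<Rightarrow> (nat \<Rightarrow> real) \<Rightarrow> (nat \<Rightarrow> real) \<Rightarrow> real^3 \<Rightarrow> nat \<Rightarrow> real" where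
  "f3 d e1 e2 x j = e1 j * x$1 + e2 j * x$2 - d"

definition field :: "real \<Rightarrow> real \<Rightarrow> real \<Rightarrow> real \<Rightarrow> (nat \<Rightarrow> real) \<Rightarrow> (nat \<Rightarrow> real)
    \<Rightarrow> (nat \<Rightarrow> real) \<Rightarrow> (nat \<Rightarrow> real) \<Rightarrow> nat \<Rightarrow> real^3 \<Rightarrow> real^3" where
  "field r d b1 b2 c1 c2 e1 e2 j x =
     vector [x$1 * f1 r b1 c1 x j, x$2 * f2 r b2 c2 x j, x$3 * f3 d e1 e2 x j]"

text \<open>Admissible sample path of the switching process xi on [0,oo): values in S,
  piecewise constant and right-continuous with finitely many jumps in every
  bounded interval (every jump time of [0,T) lies in a finite set D; the value at a
  jump time is the new value). Almost every path of the continuous-time Markov chain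
  on S with finite rates q12, q21 is of this form.\<close>
definition switching_path :: "(real \<Rightarrow> nat) \<Rightarrow> bool" where
  "switching_path \<sigma> \<longleftrightarrow> (\<forall>t. \<sigma> t \<in> Sset) \<and>
     (\<forall>T. \<exists>D. finite D \<and>
        (\<forall>s t. 0 \<le> s \<and> s \<le> t \<and> t < T \<and> {s<..t} \<inter> D = {} \<longrightarrow> \<sigma> s = \<sigma> t))"

text \<open>X solves dX_i/dt = X_i f_i(X, xi(t)) on [0,oo) along the path sigma:
  X is continuous on [0,oo) and has right derivative equal to the vector field
  at every t >= 0 (the path is right-continuous, so this is the usual notion).\<close>
definition solves :: "real \<Rightarrow> real \<Rightarrow> real \<Rightarrow> real \<Rightarrow> (nat \<Rightarrow> real) \<Rightarrow> (nat \<Rightarrow> real)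
    \<Rightarrow> (nat \<Rightarrow> real) \<Rightarrow> (nat \<Rightarrow> real) \<Rightarrow> (real \<Rightarrow> nat) \<Rightarrow> (real \<Rightarrow> real^3) \<Rightarrow> bool" where
  "solves r d b1 b2 c1 c2 e1 e2 \<sigma> X \<longleftrightarrow>
     continuous_on {0..} X \<and>
     (\<forall>t\<ge>0. (X has_vector_derivative field r d b1 b2 c1 c2 e1 e2 (\<sigma> t) (X t)) (at t within {t..}))"

end

theory Submission
  imports Defs
begin


lemma mvi_right:
  fixes \<phi> \<phi>' :: "real \<Rightarrow> real"
  assumes ab: "a \<le> b" and cont: "continuous_on {a..b} \<phi>"
    and der: "\<And>t. a \<le> t \<Longrightarrow> t < b \<Longrightarrow> (\<phi> has_real_derivative \<phi>' t) (at_right t)"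
    and neg: "\<And>t. a \<le> t \<Longrightarrow> t < b \<Longrightarrow> \<phi>' t \<le> 0"
  shows "\<phi> b \<le> \<phi> a"
proof -
  have main: "\<phi> b \<le> \<phi> a + e * (b - a)" if e: "e > 0" for e
  proof -
    define S where "S = {t\<in>{a..b}. \<phi> t - e * (t - a) \<le> \<phi> a}"
    have clS: "closed S" unfolding S_def
      by (intro continuous_on_closed_Collect_le continuous_intros cont)
    have aS: "a \<in> S" using ab by (auto simp: S_def)
    have bdd: "bdd_above S" by (auto simp: S_def bdd_above_def)
    define s where "s = Sup S"
    have sS: "s \<in> S" unfolding s_def using closed_contains_Sup[OF _ bdd clS] aS by blast
    have sb: "s = b"
    proof (rule ccontr)
      assume "s \<noteq> b"
      with sS have sb: "s < b" "a \<le> s" by (auto simp: S_def)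
      have "((\<lambda>y. (\<phi> y - \<phi> s) / (y - s)) \<longlongrightarrow> \<phi>' s) (at_right s)"
        using der[OF sb(2) sb(1)] by (simp add: has_field_derivative_iff)
      moreover have "\<phi>' s < e" using neg[OF sb(2) sb(1)] e by simp
      ultimately have "eventually (\<lambda>y. (\<phi> y - \<phi> s) / (y - s) < e) (at_right s)"
        by (rule order_tendstoD(2))
      then obtain c where c: "c > s" "\<And>y. y > s \<Longrightarrow> y < c \<Longrightarrow> (\<phi> y - \<phi> s) / (y - s) < e"
        by (auto simp: eventually_at_right_field)
      define y where "y = (s + min c b) / 2"
      have y: "s < y" "y < c" "y \<le> b" using c sb by (auto simp: y_def)
      have "(\<phi> y - \<phi> s) / (y - s) < e" using c(2) y by auto
      hence "\<phi> y - \<phi> s < e * (y - s)" using y by (simp add: divide_less_eq)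
      moreover have "\<phi> s - e * (s - a) \<le> \<phi> a" using sS by (auto simp: S_def)
      ultimately have "y \<in> S" using y sb by (auto simp: S_def algebra_simps)
      hence "y \<le> s" unfolding s_def using bdd by (rule cSup_upper)
      with y show False by simp
    qed
    show ?thesis using sS sb by (auto simp: S_def algebra_simps)
  qed
  show ?thesis
  proof (rule field_le_epsilon)
    fix e :: real assume "e > 0"
    hence "e / (b - a + 1) > 0" using ab by simp
    from main[OF this] have "\<phi> b \<le> \<phi> a + e / (b - a + 1) * (b - a)" .
    also have "e / (b - a + 1) * (b - a) \<le> e"
      using ab \<open>e>0\<close> by (simp add: field_simps)
    finally show "\<phi> b \<le> \<phi> a + e" by simp
  qed
qed

definition sol :: "(nat \<Rightarrow> real^3 \<Rightarrow> real^3) \<Rightarrow> (real \<Rightarrow> nat) \<Rightarrow> (real \<Rightarrow> real^3) \<Rightarrow> real \<Rightarrow> bool" where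
  "sol G \<sigma> X T \<longleftrightarrow> continuous_on {0..T} X \<and>
     (\<forall>t. 0 \<le> t \<and> t < T \<longrightarrow> (X has_vector_derivative G (\<sigma> t) (X t)) (at_right t))"

lemma comp_deriv:
  assumes "(X has_vector_derivative v) F"
  shows "((\<lambda>t. X t $ i) has_real_derivative v $ i) F"
  using bounded_linear.has_vector_derivative[OF bounded_linear_vec_nth assms]
  by (simp add: has_real_derivative_iff_has_vector_derivative)

lemma abs_mult_bnd: "\<bar>x\<bar> \<le> (B::real) \<Longrightarrow> 0 \<le> a \<Longrightarrow> \<bar>a * x\<bar> \<le> a * B"
  by (simp add: abs_mult mult_left_mono)

lemma prod_diff_bnd:
  fixes u u' v v' :: real
  assumes "\<bar>v\<bar> \<le> Mv" "\<bar>u'\<bar> \<le> Mu"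
  shows "\<bar>u * v - u' * v'\<bar> \<le> \<bar>u - u'\<bar> * Mv + Mu * \<bar>v - v'\<bar>"
proof -
  have "u * v - u' * v' = (u - u') * v + u' * (v - v')" by (simp add: algebra_simps)
  hence "\<bar>u * v - u' * v'\<bar> \<le> \<bar>u - u'\<bar> * \<bar>v\<bar> + \<bar>u'\<bar> * \<bar>v - v'\<bar>"
    by (metis abs_mult abs_triangle_ineq)
  also have "\<dots> \<le> \<bar>u - u'\<bar> * Mv + Mu * \<bar>v - v'\<bar>"
    using assms by (intro add_mono mult_mono) auto
  finally show ?thesis .
qed

lemma pos1d:
  fixes x g :: "real \<Rightarrow> real"
  assumes cont: "continuous_on {0..T} x"
    and der: "\<And>t. 0 \<le> t \<Longrightarrow> t < T \<Longrightarrow> (x has_real_derivative x t * g t) (at_right t)"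
    and bnd: "\<And>t. 0 \<le> t \<Longrightarrow> t < T \<Longrightarrow> \<bar>g t\<bar> \<le> M"
  shows "x 0 = 0 \<Longrightarrow> 0 \<le> t \<Longrightarrow> t \<le> T \<Longrightarrow> x t = 0"
    and "x 0 > 0 \<Longrightarrow> 0 \<le> t \<Longrightarrow> t \<le> T \<Longrightarrow> x t > 0"
proof -
  assume x0: "x 0 = 0" and t: "0 \<le> t" "t \<le> T"
  define \<phi> where "\<phi> s = x s * x s * exp (- (2*M) * s)" for s
  define \<phi>' where "\<phi>' s = 2 * (x s * x s) * exp (- (2*M) * s) * (g s - M)" for s
  have "\<phi> t \<le> \<phi> 0"
  proof (rule mvi_right[of 0 t \<phi> \<phi>'])
    show "continuous_on {0..t} \<phi>" unfolding \<phi>_def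
      using continuous_on_subset[OF cont, of "{0..t}"] t by (auto intro!: continuous_intros)
  next
    fix s assume s: "0 \<le> s" "s < t"
    have dx: "(x has_real_derivative x s * g s) (at_right s)" using der[of s] s t by auto
    show "(\<phi> has_real_derivative \<phi>' s) (at_right s)"
      unfolding \<phi>_def \<phi>'_def
      by (rule derivative_eq_intros dx refl | simp add: algebra_simps)+
    have "g s - M \<le> 0" using bnd[of s] s t by auto
    thus "\<phi>' s \<le> 0" unfolding \<phi>'_def
      by (intro mult_nonneg_nonpos) auto
  qed (use t in auto)
  hence "x t * x t * exp (- (2*M) * t) \<le> 0" using x0 by (simp add: \<phi>_def)
  hence "x t * x t \<le> 0" by (simp add: mult_le_0_iff)
  thus "x t = 0" by (metis mult_eq_0_iff not_square_less_zero order_antisym_conv zero_le_square)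
next
  assume x0: "x 0 > 0" and t: "0 \<le> t" "t \<le> T"
  have nz: "x s \<noteq> 0" if s: "0 \<le> s" "s \<le> T" for s
  proof -
    define \<phi> where "\<phi> s = - (x s * x s * exp ((2*M) * s))" for s
    define \<phi>' where "\<phi>' s = - (2 * (x s * x s) * exp ((2*M) * s) * (g s + M))" for s
    have "\<phi> s \<le> \<phi> 0"
    proof (rule mvi_right[of 0 s \<phi> \<phi>'])
      show "continuous_on {0..s} \<phi>" unfolding \<phi>_def
        using continuous_on_subset[OF cont, of "{0..s}"] s by (auto intro!: continuous_intros)
    next
      fix u assume u: "0 \<le> u" "u < s"
      have dx: "(x has_real_derivative x u * g u) (at_right u)" using der[of u] u s by auto
      show "(\<phi> has_real_derivative \<phi>' u) (at_right u)"
        unfolding \<phi>_def \<phi>'_def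
        by (rule derivative_eq_intros dx refl | simp add: algebra_simps)+
      have "g u + M \<ge> 0" using bnd[of u] u s by auto
      thus "\<phi>' u \<le> 0" unfolding \<phi>'_def by simp
    qed (use s in auto)
    hence "x 0 * x 0 \<le> x s * x s * exp ((2*M) * s)" by (simp add: \<phi>_def)
    moreover have "x 0 * x 0 > 0" using x0 by simp
    ultimately show ?thesis by auto
  qed
  show "x t > 0"
  proof (rule ccontr)
    assume "\<not> x t > 0"
    hence "x t \<le> 0" by simp
    then obtain s where "0 \<le> s" "s \<le> t" "x s = 0"
      using IVT2'[of x t 0 0] x0 t continuous_on_subset[OF cont, of "{0..t}"] by auto
    with nz[of s] t show False by auto
  qed
qed

lemma bounded_on_Icc:
  fixes X :: "real \<Rightarrow> 'a::real_normed_vector"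
  assumes "continuous_on {a..b} X"
  obtains B where "B \<ge> 0" "\<And>t. a \<le> t \<Longrightarrow> t \<le> b \<Longrightarrow> norm (X t) \<le> B"
proof -
  have "compact (X ` {a..b})" by (rule compact_continuous_image[OF assms compact_Icc])
  then obtain B where "\<forall>x\<in>X ` {a..b}. norm x \<le> B" using compact_imp_bounded bounded_iff by metis
  hence "\<And>t. a \<le> t \<Longrightarrow> t \<le> b \<Longrightarrow> norm (X t) \<le> max B 0" by force
  thus ?thesis using that[of "max B 0"] by simp
qed

lemma sol_unique:
  assumes solX: "sol G \<sigma> X T" and solY: "sol G \<sigma> Y T" and X0: "X 0 = Y 0"
    and lip: "\<And>B. B \<ge> 0 \<Longrightarrow> \<exists>L\<ge>0. \<forall>t x y. (\<forall>k. \<bar>x$k\<bar> \<le> B) \<longrightarrow> (\<forall>k. \<bar>y$k\<bar> \<le> B) \<longrightarrow>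
       norm (G (\<sigma> t) x - G (\<sigma> t) y) \<le> L * norm (x - y)"
    and t: "0 \<le> t" "t \<le> T"
  shows "X t = Y t"
proof -
  obtain B1 where B1: "B1 \<ge> 0" "\<And>t. 0 \<le> t \<Longrightarrow> t \<le> T \<Longrightarrow> norm (X t) \<le> B1"
    using bounded_on_Icc solX unfolding sol_def by blast
  obtain B2 where B2: "B2 \<ge> 0" "\<And>t. 0 \<le> t \<Longrightarrow> t \<le> T \<Longrightarrow> norm (Y t) \<le> B2"
    using bounded_on_Icc solY unfolding sol_def by blast
  obtain L where L: "L \<ge> 0" "\<And>t x y. (\<forall>k. \<bar>x$k\<bar> \<le> B1 + B2) \<Longrightarrow> (\<forall>k. \<bar>y$k\<bar> \<le> B1 + B2) \<Longrightarrow>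
       norm (G (\<sigma> t) x - G (\<sigma> t) y) \<le> L * norm (x - y)"
    using lip[of "B1 + B2"] B1 B2 by auto
  have Xb: "\<forall>k. \<bar>X s $ k\<bar> \<le> B1 + B2" if "0 \<le> s" "s \<le> T" for s
    using B1(2)[OF that] B2(1) component_le_norm_cart[of "X s"] by (meson add_increasing2 order_trans)
  have Yb: "\<forall>k. \<bar>Y s $ k\<bar> \<le> B1 + B2" if "0 \<le> s" "s \<le> T" for s
    using B2(2)[OF that] B1(1) component_le_norm_cart[of "Y s"] by (meson add_increasing order_trans)
  define Z where "Z s = X s - Y s" for s
  define \<phi> where "\<phi> s = inner (Z s) (Z s) * exp (- (2*L) * s)" for s
  define \<phi>' where "\<phi>' s = (inner (Z s) (G (\<sigma> s) (X s) - G (\<sigma> s) (Y s)) + inner (G (\<sigma> s) (X s) - G (\<sigma> s) (Y s)) (Z s)) * exp (- (2*L) * s)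
      + inner (Z s) (Z s) * (exp (- (2*L) * s) * (- (2*L)))" for s
  have "\<phi> t \<le> \<phi> 0"
  proof (rule mvi_right[of 0 t \<phi> \<phi>'])
    show "continuous_on {0..t} \<phi>" unfolding \<phi>_def Z_def
      using continuous_on_subset[OF solX[unfolded sol_def, THEN conjunct1], of "{0..t}"]
        continuous_on_subset[OF solY[unfolded sol_def, THEN conjunct1], of "{0..t}"] t
      by (auto intro!: continuous_intros)
  next
    fix s assume s: "0 \<le> s" "s < t"
    have dZ: "(Z has_vector_derivative (G (\<sigma> s) (X s) - G (\<sigma> s) (Y s))) (at_right s)"
      unfolding Z_def using solX solY s t unfolding sol_def
      by (intro derivative_intros) auto
    have dw: "((\<lambda>s. inner (Z s) (Z s)) has_real_derivative
        inner (Z s) (G (\<sigma> s) (X s) - G (\<sigma> s) (Y s)) + inner (G (\<sigma> s) (X s) - G (\<sigma> s) (Y s)) (Z s)) (at_right s)"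
      using bounded_bilinear.has_vector_derivative[OF bounded_bilinear_inner dZ dZ]
      by (simp add: has_real_derivative_iff_has_vector_derivative)
    show "(\<phi> has_real_derivative \<phi>' s) (at_right s)"
      unfolding \<phi>_def \<phi>'_def
      by (rule derivative_eq_intros dw refl | simp)+
    have "inner (Z s) (G (\<sigma> s) (X s) - G (\<sigma> s) (Y s)) \<le> norm (Z s) * norm (G (\<sigma> s) (X s) - G (\<sigma> s) (Y s))"
      by (rule norm_cauchy_schwarz)
    also have "\<dots> \<le> norm (Z s) * (L * norm (Z s))"
      using L(2)[OF Xb Yb, of s s s] s t unfolding Z_def by (intro mult_left_mono) auto
    finally have "inner (Z s) (G (\<sigma> s) (X s) - G (\<sigma> s) (Y s)) \<le> L * inner (Z s) (Z s)"
      by (simp add: dot_square_norm power2_eq_square algebra_simps)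
    hence "inner (Z s) (G (\<sigma> s) (X s) - G (\<sigma> s) (Y s)) + inner (G (\<sigma> s) (X s) - G (\<sigma> s) (Y s)) (Z s)
        - 2 * L * inner (Z s) (Z s) \<le> 0" by (simp add: inner_commute)
    hence "(inner (Z s) (G (\<sigma> s) (X s) - G (\<sigma> s) (Y s)) + inner (G (\<sigma> s) (X s) - G (\<sigma> s) (Y s)) (Z s)
        - 2 * L * inner (Z s) (Z s)) * exp (- (2*L) * s) \<le> 0"
      by (simp add: mult_nonpos_nonneg)
    thus "\<phi>' s \<le> 0" unfolding \<phi>'_def by (simp add: algebra_simps)
  qed (use t in auto)
  hence "inner (Z t) (Z t) * exp (- (2*L) * t) \<le> 0" using X0 by (simp add: \<phi>_def Z_def)
  hence "inner (Z t) (Z t) \<le> 0" by (simp add: mult_le_0_iff)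
  hence "Z t = 0" using inner_ge_zero[of "Z t"] by (metis antisym inner_eq_zero_iff)
  thus ?thesis by (simp add: Z_def)
qed

locale LV =
  fixes r d b1 b2 :: real and c1 c2 e1 e2 :: "nat \<Rightarrow> real"
  assumes r: "r > 0" and d: "d > 0" and b1: "b1 > 0" and b2: "b2 > 0"
    and pos: "\<forall>j\<in>Sset. c1 j > 0 \<and> c2 j > 0 \<and> e1 j > 0 \<and> e2 j > 0"
begin

abbreviation "F \<equiv> field r d b1 b2 c1 c2 e1 e2"

definition "P = c1 1 + c1 2 + c2 1 + c2 2 + e1 1 + e1 2 + e2 1 + e2 2"
definition "Q = 1 + b1 + b2 + P"

lemma coef:
  assumes "j \<in> Sset"
  shows "0 < c1 j" "0 < c2 j" "0 < e1 j" "0 < e2 j"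
    "c1 j \<le> P" "c2 j \<le> P" "e1 j \<le> P" "e2 j \<le> P" "e1 j + e2 j \<le> P"
proof -
  have j: "j = 1 \<or> j = 2" using assms by (auto simp: Sset_def)
  have p1: "0 < c1 1 \<and> 0 < c2 1 \<and> 0 < e1 1 \<and> 0 < e2 1" using pos by (auto simp: Sset_def)
  have p2: "0 < c1 2 \<and> 0 < c2 2 \<and> 0 < e1 2 \<and> 0 < e2 2" using pos by (auto simp: Sset_def)
  show "0 < c1 j" "0 < c2 j" "0 < e1 j" "0 < e2 j" using j p1 p2 by auto
  show "c1 j \<le> P" "c2 j \<le> P" "e1 j \<le> P" "e2 j \<le> P" "e1 j + e2 j \<le> P" using j p1 p2 by (auto simp: P_def)
qed

lemma P_pos: "P > 0" using coef[of 1] by (auto simp: Sset_def P_def)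
lemma Q_pos: "Q > 1" using P_pos b1 b2 by (auto simp: Q_def)

lemma F1: "F j x $ 1 = x$1 * (r - x$1 - b1 * x$2 - c1 j * x$3)"
  by (simp add: field_def f1_def)
lemma F2: "F j x $ 2 = x$2 * (r - x$2 - b2 * x$1 - c2 j * x$3)"
  by (simp add: field_def f2_def)
lemma F3: "F j x $ 3 = x$3 * (e1 j * x$1 + e2 j * x$2 - d)"
  by (simp add: field_def f3_def)

lemma F_comp_lip:
  assumes j: "j \<in> Sset" and B: "0 \<le> B" and x: "\<And>k. \<bar>x$k\<bar> \<le> B" and y: "\<And>k. \<bar>y$k\<bar> \<le> B"
  shows "\<bar>(F j x - F j y) $ i\<bar> \<le> (r + d + 4*Q*B) * (\<bar>x$1 - y$1\<bar> + \<bar>x$2 - y$2\<bar> + \<bar>x$3 - y$3\<bar>)"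
proof -
  note cf = coef[OF j]
  define S where "S = \<bar>x$1 - y$1\<bar> + \<bar>x$2 - y$2\<bar> + \<bar>x$3 - y$3\<bar>"
  have S0: "S \<ge> 0" "\<bar>x$1 - y$1\<bar> \<le> S" "\<bar>x$2 - y$2\<bar> \<le> S" "\<bar>x$3 - y$3\<bar> \<le> S" by (auto simp: S_def)
  have QP: "P \<le> Q" "b1 \<le> Q" "b2 \<le> Q" "1 \<le> Q" using P_pos b1 b2 by (auto simp: Q_def)
  have L: "0 \<le> r + d + 4*Q*B" using r d Q_pos B by simp
  have c1: "\<bar>(F j x - F j y) $ 1\<bar> \<le> (r + d + 4*Q*B) * S"
  proof -
    have v0: "\<bar>r - x$1 - b1 * x$2 - c1 j * x$3\<bar> \<le> r + Q*B + Q*B + Q*B"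
      using x[of 1] abs_mult_bnd[OF x[of 2], of b1] abs_mult_bnd[OF x[of 3], of "c1 j"] cf b1 r
        mult_right_mono[OF QP(2) B] mult_right_mono[OF order_trans[OF cf(5) QP(1)] B] mult_right_mono[OF QP(4) B]
      by linarith
    have v: "\<bar>r - x$1 - b1 * x$2 - c1 j * x$3\<bar> \<le> r + 3*Q*B"
      using v0 by (simp add: algebra_simps)
    have vv: "\<bar>(r - x$1 - b1 * x$2 - c1 j * x$3) - (r - y$1 - b1 * y$2 - c1 j * y$3)\<bar> \<le> Q * S"
    proof -
      have "\<bar>b1 * (x$2 - y$2)\<bar> \<le> b1 * S" using abs_mult_bnd[OF S0(3)] b1 by simp
      moreover have "\<bar>c1 j * (x$3 - y$3)\<bar> \<le> c1 j * S" using abs_mult_bnd[OF S0(4)] cf by simp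
      moreover have "(b1 + c1 j + 1) * S \<le> Q * S" using S0(1) cf(5) b2
        by (intro mult_right_mono) (auto simp: Q_def)
      ultimately show ?thesis using S0 by (simp add: algebra_simps)
    qed
    have "\<bar>(F j x - F j y) $ 1\<bar> \<le> \<bar>x$1 - y$1\<bar> * (r + 3*Q*B) + B * (Q * S)"
      unfolding vector_minus_component F1
      by (rule order_trans[OF prod_diff_bnd[OF _ y[of 1]]]) (use v vv B in \<open>auto intro!: add_mono mult_left_mono\<close>)
    also have "\<dots> \<le> S * (r + 3*Q*B) + B * (Q * S)"
      using S0 r Q_pos B by (intro add_mono mult_right_mono) auto
    also have "\<dots> = (r + 4*Q*B) * S" by (simp add: algebra_simps)
    also have "\<dots> \<le> (r + d + 4*Q*B) * S" using S0 d by (intro mult_right_mono) auto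
    finally show ?thesis .
  qed
  have c2: "\<bar>(F j x - F j y) $ 2\<bar> \<le> (r + d + 4*Q*B) * S"
  proof -
    have v0: "\<bar>r - x$2 - b2 * x$1 - c2 j * x$3\<bar> \<le> r + Q*B + Q*B + Q*B"
      using x[of 2] abs_mult_bnd[OF x[of 1], of b2] abs_mult_bnd[OF x[of 3], of "c2 j"] cf b2 r
        mult_right_mono[OF QP(3) B] mult_right_mono[OF order_trans[OF cf(6) QP(1)] B] mult_right_mono[OF QP(4) B]
      by linarith
    have v: "\<bar>r - x$2 - b2 * x$1 - c2 j * x$3\<bar> \<le> r + 3*Q*B"
      using v0 by (simp add: algebra_simps)
    have vv: "\<bar>(r - x$2 - b2 * x$1 - c2 j * x$3) - (r - y$2 - b2 * y$1 - c2 j * y$3)\<bar> \<le> Q * S"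
    proof -
      have "\<bar>b2 * (x$1 - y$1)\<bar> \<le> b2 * S" using abs_mult_bnd[OF S0(2)] b2 by simp
      moreover have "\<bar>c2 j * (x$3 - y$3)\<bar> \<le> c2 j * S" using abs_mult_bnd[OF S0(4)] cf by simp
      moreover have "(b2 + c2 j + 1) * S \<le> Q * S" using S0(1) cf(6) b1
        by (intro mult_right_mono) (auto simp: Q_def)
      ultimately show ?thesis using S0 by (simp add: algebra_simps)
    qed
    have "\<bar>(F j x - F j y) $ 2\<bar> \<le> \<bar>x$2 - y$2\<bar> * (r + 3*Q*B) + B * (Q * S)"
      unfolding vector_minus_component F2
      by (rule order_trans[OF prod_diff_bnd[OF _ y[of 2]]]) (use v vv B in \<open>auto intro!: add_mono mult_left_mono\<close>)
    also have "\<dots> \<le> S * (r + 3*Q*B) + B * (Q * S)"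
      using S0 r Q_pos B by (intro add_mono mult_right_mono) auto
    also have "\<dots> = (r + 4*Q*B) * S" by (simp add: algebra_simps)
    also have "\<dots> \<le> (r + d + 4*Q*B) * S" using S0 d by (intro mult_right_mono) auto
    finally show ?thesis .
  qed
  have c3: "\<bar>(F j x - F j y) $ 3\<bar> \<le> (r + d + 4*Q*B) * S"
  proof -
    have v0: "\<bar>e1 j * x$1 + e2 j * x$2 - d\<bar> \<le> d + Q*B + Q*B"
      using abs_mult_bnd[OF x[of 1], of "e1 j"] abs_mult_bnd[OF x[of 2], of "e2 j"] cf d
        mult_right_mono[OF order_trans[OF cf(7) QP(1)] B] mult_right_mono[OF order_trans[OF cf(8) QP(1)] B]
      by linarith
    have v: "\<bar>e1 j * x$1 + e2 j * x$2 - d\<bar> \<le> d + 2*Q*B"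
      using v0 by (simp add: algebra_simps)
    have vv: "\<bar>(e1 j * x$1 + e2 j * x$2 - d) - (e1 j * y$1 + e2 j * y$2 - d)\<bar> \<le> Q * S"
    proof -
      have "\<bar>e1 j * (x$1 - y$1)\<bar> \<le> e1 j * S" using abs_mult_bnd[OF S0(2)] cf by simp
      moreover have "\<bar>e2 j * (x$2 - y$2)\<bar> \<le> e2 j * S" using abs_mult_bnd[OF S0(3)] cf by simp
      moreover have "(e1 j + e2 j) * S \<le> Q * S" using S0(1) cf(9) b1 b2
        by (intro mult_right_mono) (auto simp: Q_def)
      ultimately show ?thesis using S0 by (simp add: algebra_simps)
    qed
    have "\<bar>(F j x - F j y) $ 3\<bar> \<le> \<bar>x$3 - y$3\<bar> * (d + 2*Q*B) + B * (Q * S)"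
      unfolding vector_minus_component F3
      by (rule order_trans[OF prod_diff_bnd[OF _ y[of 3]]]) (use v vv B in \<open>auto intro!: add_mono mult_left_mono\<close>)
    also have "\<dots> \<le> S * (d + 2*Q*B) + B * (Q * S)"
      using S0 d Q_pos B by (intro add_mono mult_right_mono) auto
    also have "\<dots> = (d + 3*Q*B) * S" by (simp add: algebra_simps)
    also have "\<dots> \<le> (r + d + 4*Q*B) * S" using S0 r Q_pos B by (intro mult_right_mono) auto
    finally show ?thesis .
  qed
  show ?thesis using c1 c2 c3 exhaust_3[of i] unfolding S_def by auto
qed

lemma F_lip:
  assumes j: "j \<in> Sset" and B: "0 \<le> B" and x: "\<And>k. \<bar>x$k\<bar> \<le> B" and y: "\<And>k. \<bar>y$k\<bar> \<le> B"
  shows "norm (F j x - F j y) \<le> 9 * (r + d + 4*Q*B) * norm (x - y)"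
proof -
  define L where "L = r + d + 4*Q*B"
  have L0: "L \<ge> 0" using r d Q_pos B by (simp add: L_def)
  have "\<bar>x$1 - y$1\<bar> + \<bar>x$2 - y$2\<bar> + \<bar>x$3 - y$3\<bar> \<le> 3 * norm (x - y)"
    using component_le_norm_cart[of "x - y" 1] component_le_norm_cart[of "x - y" 2]
      component_le_norm_cart[of "x - y" 3] by simp
  hence cb: "\<bar>(F j x - F j y) $ i\<bar> \<le> L * (3 * norm (x - y))" for i
    using F_comp_lip[OF j B x y, of i] L0 unfolding L_def[symmetric]
    by (meson mult_left_mono order_trans)
  have "norm (F j x - F j y) \<le> (\<Sum>i\<in>UNIV. \<bar>(F j x - F j y) $ i\<bar>)" by (rule norm_le_l1_cart)
  also have "\<dots> \<le> (\<Sum>i\<in>(UNIV::3 set). L * (3 * norm (x - y)))" by (rule sum_mono) (rule cb)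
  also have "\<dots> = 9 * L * norm (x - y)" by simp
  finally show ?thesis by (simp add: L_def)
qed

end



lemma switching_D:
  assumes "switching_path \<sigma>"
  obtains D where "finite D" "\<And>s t. 0 \<le> s \<Longrightarrow> s \<le> t \<Longrightarrow> t < T \<Longrightarrow> {s<..t} \<inter> D = {} \<Longrightarrow> \<sigma> s = \<sigma> t"
proof -
  from assms[unfolded switching_path_def, THEN conjunct2, THEN spec[of _ T]] obtain D where
    "finite D" "\<forall>s t. 0 \<le> s \<and> s \<le> t \<and> t < T \<and> {s<..t} \<inter> D = {} \<longrightarrow> \<sigma> s = \<sigma> t"
    by auto
  thus ?thesis by (intro that[of D]) auto
qed

lemma finite_gap:
  fixes x :: real
  assumes "finite D"
  obtains \<delta> where "\<delta> > 0" "\<And>y. y \<in> D \<Longrightarrow> y \<noteq> x \<Longrightarrow> \<delta> \<le> \<bar>y - x\<bar>"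
proof -
  define E where "E = (\<lambda>y. \<bar>y - x\<bar>) ` (D - {x})"
  have fE: "finite E" using assms by (simp add: E_def)
  have Ep: "\<forall>e\<in>E. e > 0" by (auto simp: E_def)
  show ?thesis
  proof (cases "E = {}")
    case True
    thus ?thesis using that[of 1] by (auto simp: E_def)
  next
    case False
    show ?thesis
    proof (rule that[of "Min E"])
      show "Min E > 0" using Ep fE False by simp
      fix y assume "y \<in> D" "y \<noteq> x"
      hence "\<bar>y - x\<bar> \<in> E" by (auto simp: E_def)
      thus "Min E \<le> \<bar>y - x\<bar>" using fE by simp
    qed
  qed
qed

lemma pc_integrable:
  fixes \<phi> :: "nat \<Rightarrow> real \<Rightarrow> 'a::banach"
  assumes sw: "switching_path \<sigma>" and a: "0 \<le> a"
    and cont: "\<And>j. j \<in> Sset \<Longrightarrow> continuous_on {a..b} (\<phi> j)"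
  shows "(\<lambda>u. \<phi> (\<sigma> u) u) integrable_on {a..b}"
proof -
  have Sv: "\<sigma> t \<in> Sset" for t using sw by (simp add: switching_path_def)
  obtain D where fD: "finite D" and D: "\<And>s t. 0 \<le> s \<Longrightarrow> s \<le> t \<Longrightarrow> t < b + 1 \<Longrightarrow> {s<..t} \<inter> D = {} \<Longrightarrow> \<sigma> s = \<sigma> t"
    using switching_D[OF sw, of "b + 1"] by blast
  have "(\<lambda>u. \<phi> (\<sigma> u) u) integrable_on cbox a b"
  proof (rule integrable_on_little_subintervals, intro ballI)
    fix x assume x: "x \<in> cbox a b"
    obtain \<delta> where \<delta>: "\<delta> > 0" "\<And>y. y \<in> D \<Longrightarrow> y \<noteq> x \<Longrightarrow> \<delta> \<le> \<bar>y - x\<bar>"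
      using finite_gap[OF fD, of x] by blast
    show "\<exists>d>0. \<forall>u v. x \<in> cbox u v \<and> cbox u v \<subseteq> ball x d \<and> cbox u v \<subseteq> cbox a b \<longrightarrow>
          (\<lambda>u. \<phi> (\<sigma> u) u) integrable_on cbox u v"
    proof (intro exI[of _ \<delta>] conjI allI impI)
      show "\<delta> > 0" by fact
      fix u v assume uv: "x \<in> cbox u v \<and> cbox u v \<subseteq> ball x \<delta> \<and> cbox u v \<subseteq> cbox a b"
      hence uxv: "u \<le> x" "x \<le> v" by simp_all
      have sub: "{u..v} \<subseteq> {a..b}" using uv by (simp add: cbox_interval)
      have "u \<in> cbox u v" "v \<in> cbox u v" using uxv by (simp_all add: cbox_interval)
      hence "u \<in> ball x \<delta>" "v \<in> ball x \<delta>" using uv by blast+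
      hence ub: "x - \<delta> < u" "v < x + \<delta>" by (auto simp: dist_real_def)
      have ab: "a \<le> u" "v \<le> b" using sub uxv by (auto simp: subset_iff)
      have right: "\<sigma> w = \<sigma> x" if "x \<le> w" "w \<le> v" for w
      proof -
        have "{x<..w} \<inter> D = {}"
        proof (rule ccontr)
          assume "{x<..w} \<inter> D \<noteq> {}"
          then obtain y where "y \<in> D" "x < y" "y \<le> w" by auto
          with \<delta>(2)[of y] ub that show False by auto
        qed
        thus ?thesis using D[of x w] that ab a uxv by auto
      qed
      have left: "\<sigma> w = \<sigma> u" if "u \<le> w" "w < x" for w
      proof -
        have "{u<..w} \<inter> D = {}"
        proof (rule ccontr)
          assume "{u<..w} \<inter> D \<noteq> {}"
          then obtain y where "y \<in> D" "u < y" "y \<le> w" by auto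
          with \<delta>(2)[of y] ub that show False by auto
        qed
        thus ?thesis using D[of u w] that ab a uxv by auto
      qed
      have i2: "(\<lambda>u. \<phi> (\<sigma> u) u) integrable_on {x..v}"
      proof -
        have "{x..v} \<subseteq> {a..b}" using ab uxv by auto
        hence i: "\<phi> (\<sigma> x) integrable_on {x..v}"
          by (rule integrable_continuous_interval[OF continuous_on_subset[OF cont[OF Sv]]])
        have e: "\<phi> (\<sigma> w) w = \<phi> (\<sigma> x) w" if "w \<in> {x..v}" for w using right[of w] that by simp
        show ?thesis using Henstock_Kurzweil_Integration.integrable_cong[of "{x..v}" "\<lambda>w. \<phi> (\<sigma> w) w" "\<phi> (\<sigma> x)", OF e] i by simp
      qed
      have i1: "(\<lambda>u. \<phi> (\<sigma> u) u) integrable_on {u..x}"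
      proof -
        have "{u..x} \<subseteq> {a..b}" using ab uxv by auto
        hence i: "\<phi> (\<sigma> u) integrable_on {u..x}"
          by (rule integrable_continuous_interval[OF continuous_on_subset[OF cont[OF Sv]]])
        show ?thesis
        proof (rule integrable_spike_finite[of "{x}" _ _ "\<phi> (\<sigma> u)"])
          fix w assume "w \<in> {u..x} - {x}"
          thus "\<phi> (\<sigma> w) w = \<phi> (\<sigma> u) w" using left[of w] by simp
        qed (use i in simp_all)
      qed
      show "(\<lambda>u. \<phi> (\<sigma> u) u) integrable_on cbox u v"
        using Henstock_Kurzweil_Integration.integrable_combine[OF uxv i1 i2] by simp
    qed
  qed
  thus ?thesis by simp
qed




lemma exist_glob:
  fixes G :: "nat \<Rightarrow> real^3 \<Rightarrow> real^3" and x0 :: "real^3"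
  assumes sw: "switching_path \<sigma>" and T: "T \<ge> 0" and L: "L \<ge> 0"
    and lip: "\<And>j x y. j \<in> Sset \<Longrightarrow> norm (G j x - G j y) \<le> L * norm (x - y)"
  shows "\<exists>X. sol G \<sigma> X T \<and> X 0 = x0"
proof -
  have Sv: "\<sigma> t \<in> Sset" for t using sw by (simp add: switching_path_def)
  have contG: "continuous_on UNIV (G j)" if j: "j \<in> Sset" for j
  proof (rule lipschitz_on_continuous_on)
    show "L-lipschitz_on UNIV (G j)" unfolding lipschitz_on_def using L lip[OF j] by (simp add: dist_norm)
  qed
  define K where "K = 2 * L + 1"
  have K: "K > 0" using L by (simp add: K_def)
  define \<tau> where "\<tau> t = max 0 (min T t)" for t
  have \<tau>: "0 \<le> \<tau> t" "\<tau> t \<le> T" for t using T by (auto simp: \<tau>_def)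
  have \<tau>id: "\<tau> t = t" if "0 \<le> t" "t \<le> T" for t using that by (simp add: \<tau>_def)
  have \<tau>c: "continuous_on UNIV \<tau>" unfolding \<tau>_def by (intro continuous_intros)
  define h where "h Z u = G (\<sigma> u) (exp (K * u) *\<^sub>R apply_bcontfun Z u)" for Z :: "real \<Rightarrow>\<^sub>C (real^3)" and u
  define P where "P Z s = exp (- (K * s)) *\<^sub>R (x0 + integral {0..s} (h Z))" for Z s
  have hint: "h Z integrable_on {0..s}" if "0 \<le> s" for Z s
  proof -
    have "(\<lambda>u. (\<lambda>j u. G j (exp (K * u) *\<^sub>R apply_bcontfun Z u)) (\<sigma> u) u) integrable_on {0..s}"
    proof (rule pc_integrable[OF sw order_refl])
      fix j assume j: "j \<in> Sset"
      have "continuous_on {0..s} (\<lambda>u. exp (K * u) *\<^sub>R apply_bcontfun Z u)"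
        by (intro continuous_intros continuous_on_apply_bcontfun)
      thus "continuous_on {0..s} (\<lambda>u. G j (exp (K * u) *\<^sub>R apply_bcontfun Z u))"
        by (rule continuous_on_compose2[OF contG[OF j]]) auto
    qed
    thus ?thesis by (simp add: h_def[abs_def])
  qed
  have Pcont: "continuous_on {0..T} (P Z)" for Z
    unfolding P_def by (intro continuous_intros indefinite_integral_continuous_1 hint T)
  have Pin: "(\<lambda>t. P Z (\<tau> t)) \<in> bcontfun" for Z
  proof -
    have c: "continuous_on UNIV (\<lambda>t. P Z (\<tau> t))"
      by (rule continuous_on_compose2[OF Pcont[of Z] \<tau>c]) (use \<tau> in auto)
    have "range (\<lambda>t. P Z (\<tau> t)) \<subseteq> P Z ` {0..T}" using \<tau> by auto
    moreover have "bounded (P Z ` {0..T})"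
      by (rule compact_imp_bounded, rule compact_continuous_image[OF Pcont compact_Icc])
    ultimately have "bounded (range (\<lambda>t. P Z (\<tau> t)))" by (rule bounded_subset[rotated])
    with c show ?thesis by (simp add: bcontfun_def)
  qed
  define \<Phi> where "\<Phi> Z = Bcontfun (\<lambda>t. P Z (\<tau> t))" for Z
  have \<Phi>app: "apply_bcontfun (\<Phi> Z) t = P Z (\<tau> t)" for Z t
    by (simp add: \<Phi>_def Bcontfun_inverse[OF Pin])
  have contr: "dist (\<Phi> Z1) (\<Phi> Z2) \<le> (L / K) * dist Z1 Z2" for Z1 Z2
  proof (rule dist_bound)
    fix t
    define s where "s = \<tau> t"
    define DD where "DD = dist Z1 Z2"
    have s: "0 \<le> s" "s \<le> T" using \<tau> by (auto simp: s_def)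
    have DD: "DD \<ge> 0" by (simp add: DD_def)
    have i1: "h Z1 integrable_on {0..s}" and i2: "h Z2 integrable_on {0..s}" using hint s by auto
    have ie: "(\<lambda>u. L * DD * exp (K * u)) integrable_on {0..s}"
      by (intro integrable_continuous_interval continuous_intros)
    have bnd: "norm (h Z1 u - h Z2 u) \<le> L * DD * exp (K * u)" for u
    proof -
      have "norm (h Z1 u - h Z2 u) \<le> L * norm (exp (K * u) *\<^sub>R apply_bcontfun Z1 u - exp (K * u) *\<^sub>R apply_bcontfun Z2 u)"
        unfolding h_def by (rule lip[OF Sv])
      also have "\<dots> = L * (exp (K * u) * dist (apply_bcontfun Z1 u) (apply_bcontfun Z2 u))"
        by (simp add: dist_norm scaleR_diff_right[symmetric])
      also have "\<dots> \<le> L * (exp (K * u) * DD)"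
        unfolding DD_def using L by (intro mult_left_mono dist_bounded) auto
      finally show ?thesis by (simp add: algebra_simps)
    qed
    have "((\<lambda>u. L * DD * exp (K * u)) has_integral (L * DD * exp (K * s) / K - L * DD * exp (K * 0) / K)) {0..s}"
    proof (rule fundamental_theorem_of_calculus[OF s(1)])
      fix x assume "x \<in> {0..s}"
      show "((\<lambda>u. L * DD * exp (K * u) / K) has_vector_derivative L * DD * exp (K * x)) (at x within {0..s})"
        unfolding has_real_derivative_iff_has_vector_derivative[symmetric]
        by (rule derivative_eq_intros refl | use K in simp)+
    qed
    hence intexp0: "integral {0..s} (\<lambda>u. L * DD * exp (K * u)) = L * DD * exp (K * s) / K - L * DD * exp (K * 0) / K"
      by (rule integral_unique)
    have intexp: "integral {0..s} (\<lambda>u. L * DD * exp (K * u)) = L * DD * (exp (K * s) - 1) / K"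
      unfolding intexp0 by (simp add: diff_divide_distrib right_diff_distrib)
    have "dist (apply_bcontfun (\<Phi> Z1) t) (apply_bcontfun (\<Phi> Z2) t) = norm (P Z1 s - P Z2 s)"
      by (simp add: \<Phi>app s_def dist_norm)
    also have "P Z1 s - P Z2 s = exp (- (K * s)) *\<^sub>R integral {0..s} (\<lambda>u. h Z1 u - h Z2 u)"
      by (simp add: P_def Henstock_Kurzweil_Integration.integral_diff[OF i1 i2] scaleR_diff_right scaleR_add_right)
    also have "norm \<dots> = exp (- (K * s)) * norm (integral {0..s} (\<lambda>u. h Z1 u - h Z2 u))" by simp
    also have "\<dots> \<le> exp (- (K * s)) * integral {0..s} (\<lambda>u. L * DD * exp (K * u))"
      by (intro mult_left_mono Henstock_Kurzweil_Integration.integral_norm_bound_integral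
          Henstock_Kurzweil_Integration.integrable_diff i1 i2 ie bnd) auto
    also have "\<dots> = L * DD * (1 - exp (- (K * s))) / K"
      unfolding intexp by (simp add: field_simps exp_minus)
    also have "\<dots> \<le> L * DD / K"
    proof -
      have "L * DD * (1 - exp (- (K * s))) \<le> L * DD * 1"
        using L DD by (intro mult_left_mono) auto
      thus ?thesis using K by (intro divide_right_mono) auto
    qed
    finally show "dist (apply_bcontfun (\<Phi> Z1) t) (apply_bcontfun (\<Phi> Z2) t) \<le> L / K * dist Z1 Z2"
      by (simp add: DD_def)
  qed
  have "\<exists>!Z. \<Phi> Z = Z"
    by (rule banach_fix_type[of "L / K"]) (use L K contr in \<open>auto simp: K_def\<close>)
  then obtain Z where Z: "\<Phi> Z = Z" by blast
  define X where "X t = exp (K * t) *\<^sub>R apply_bcontfun Z t" for t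
  define g where "g u = G (\<sigma> u) (X u)" for u
  have hg: "h Z = g" by (simp add: h_def[abs_def] g_def[abs_def] X_def)
  have gint: "g integrable_on {0..s}" if "0 \<le> s" for s using hint[OF that, of Z] hg by simp
  have Xeq: "X s = x0 + integral {0..s} g" if s: "0 \<le> s" "s \<le> T" for s
  proof -
    have "apply_bcontfun Z s = P Z s" using \<Phi>app[of Z s] Z \<tau>id[OF s] by simp
    thus ?thesis by (simp add: X_def P_def hg exp_minus)
  qed
  have X0: "X 0 = x0" using Xeq[of 0] T by simp
  have Xc: "continuous_on UNIV X" unfolding X_def by (intro continuous_intros continuous_on_apply_bcontfun)
  have der: "(X has_vector_derivative G (\<sigma> t) (X t)) (at_right t)" if t: "0 \<le> t" "t < T" for t
  proof -
    obtain D where fD: "finite D" and D: "\<And>s u. 0 \<le> s \<Longrightarrow> s \<le> u \<Longrightarrow> u < T + 1 \<Longrightarrow> {s<..u} \<inter> D = {} \<Longrightarrow> \<sigma> s = \<sigma> u"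
      using switching_D[OF sw, of "T + 1"] by blast
    obtain \<delta> where \<delta>: "\<delta> > 0" "\<And>y. y \<in> D \<Longrightarrow> y \<noteq> t \<Longrightarrow> \<delta> \<le> \<bar>y - t\<bar>"
      using finite_gap[OF fD, of t] by blast
    define b where "b = min T (t + \<delta> / 2)"
    have b: "t < b" "b \<le> T" using t \<delta> by (auto simp: b_def)
    have const: "\<sigma> u = \<sigma> t" if u: "t \<le> u" "u \<le> b" for u
    proof -
      have "{t<..u} \<inter> D = {}"
      proof (rule ccontr)
        assume "{t<..u} \<inter> D \<noteq> {}"
        then obtain y where "y \<in> D" "t < y" "y \<le> u" by auto
        with \<delta>(2)[of y] u \<delta>(1) show False by (auto simp: b_def)
      qed
      thus ?thesis using D[of t u] t u b by auto
    qed
    define g' where "g' v = G (\<sigma> t) (X v)" for v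
    have g'c: "continuous_on {t..b} g'"
      unfolding g'_def by (rule continuous_on_compose2[OF contG[OF Sv[of t]] continuous_on_subset[OF Xc]]) auto
    have d1: "((\<lambda>u. integral {t..u} g') has_vector_derivative g' t) (at t within {t..b})"
      using integral_has_vector_derivative[OF g'c, of t] b by simp
    have d2: "((\<lambda>u. (x0 + integral {0..t} g) + integral {t..u} g') has_vector_derivative g' t) (at t within {t..b})"
      using has_vector_derivative_add[OF has_vector_derivative_const d1] by simp
    have d3: "(X has_vector_derivative g' t) (at t within {t..b})"
    proof (rule has_vector_derivative_transform_within[OF d2 zero_less_one])
      show "t \<in> {t..b}" using b by simp
      fix x' assume x': "x' \<in> {t..b}"
      have gi: "g integrable_on {0..x'}" using gint x' t by simp
      have "integral {0..x'} g = integral {0..t} g + integral {t..x'} g"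
        using Henstock_Kurzweil_Integration.integral_combine[of 0 t x' g] gi t x' by simp
      moreover have "integral {t..x'} g = integral {t..x'} g'"
      proof (rule Henstock_Kurzweil_Integration.integral_cong)
        fix v assume "v \<in> {t..x'}"
        thus "g v = g' v" using const[of v] x' by (simp add: g_def g'_def)
      qed
      ultimately show "x0 + integral {0..t} g + integral {t..x'} g' = X x'"
        using Xeq[of x'] x' t b by simp
    qed
    thus ?thesis using at_within_Icc_at_right[OF b(1)] by (simp add: g'_def)
  qed
  show ?thesis
    by (rule exI[of _ X]) (use X0 Xc der in \<open>auto simp: sol_def intro: continuous_on_subset\<close>)
qed



context LV
begin

definition gf :: "3 \<Rightarrow> nat \<Rightarrow> real^3 \<Rightarrow> real" where
  "gf i j x = (if i = 1 then r - x$1 - b1 * x$2 - c1 j * x$3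
     else if i = 2 then r - x$2 - b2 * x$1 - c2 j * x$3 else e1 j * x$1 + e2 j * x$2 - d)"

lemma F_gf: "F j x $ i = x$i * gf i j x"
proof -
  have "i = 1 \<or> i = 2 \<or> i = 3" using exhaust_3 by blast
  thus ?thesis by (auto simp: gf_def F1 F2 F3)
qed

lemma gf_bnd:
  assumes j: "j \<in> Sset" and B: "0 \<le> B" and x: "\<And>k. \<bar>x$k\<bar> \<le> B"
  shows "\<bar>gf i j x\<bar> \<le> r + d + 4*Q*B"
proof -
  note cf = coef[OF j]
  have QP: "P \<le> Q" "b1 \<le> Q" "b2 \<le> Q" "1 \<le> Q" using P_pos b1 b2 by (auto simp: Q_def)
  have QB: "0 \<le> Q*B" using Q_pos B by simp
  have g1: "\<bar>r - x$1 - b1 * x$2 - c1 j * x$3\<bar> \<le> r + Q*B + Q*B + Q*B"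
    using x[of 1] abs_mult_bnd[OF x[of 2], of b1] abs_mult_bnd[OF x[of 3], of "c1 j"] cf b1 r
      mult_right_mono[OF QP(2) B] mult_right_mono[OF order_trans[OF cf(5) QP(1)] B] mult_right_mono[OF QP(4) B]
    by linarith
  have g2: "\<bar>r - x$2 - b2 * x$1 - c2 j * x$3\<bar> \<le> r + Q*B + Q*B + Q*B"
    using x[of 2] abs_mult_bnd[OF x[of 1], of b2] abs_mult_bnd[OF x[of 3], of "c2 j"] cf b2 r
      mult_right_mono[OF QP(3) B] mult_right_mono[OF order_trans[OF cf(6) QP(1)] B] mult_right_mono[OF QP(4) B]
    by linarith
  have g3: "\<bar>e1 j * x$1 + e2 j * x$2 - d\<bar> \<le> d + Q*B + Q*B"
    using abs_mult_bnd[OF x[of 1], of "e1 j"] abs_mult_bnd[OF x[of 2], of "e2 j"] cf d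
      mult_right_mono[OF order_trans[OF cf(7) QP(1)] B] mult_right_mono[OF order_trans[OF cf(8) QP(1)] B]
    by linarith
  have e: "4*Q*B = Q*B + Q*B + Q*B + Q*B" by simp
  have "i = 1 \<or> i = 2 \<or> i = 3" using exhaust_3 by blast
  have q1: "gf 1 j x = r - x$1 - b1 * x$2 - c1 j * x$3" by (simp add: gf_def)
  have q2: "gf 2 j x = r - x$2 - b2 * x$1 - c2 j * x$3" by (simp add: gf_def)
  have q3: "gf 3 j x = e1 j * x$1 + e2 j * x$2 - d" by (simp add: gf_def)
  have "i = 1 \<or> i = 2 \<or> i = 3" using exhaust_3 by blast
  moreover have "\<bar>gf 1 j x\<bar> \<le> r + d + 4*Q*B" unfolding q1 using g1 e QB d by linarith
  moreover have "\<bar>gf 2 j x\<bar> \<le> r + d + 4*Q*B" unfolding q2 using g2 e QB d by linarith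
  moreover have "\<bar>gf 3 j x\<bar> \<le> r + d + 4*Q*B" unfolding q3 using g3 e QB r by linarith
  ultimately show ?thesis by auto
qed

lemma sol_bounded:
  assumes "sol G \<sigma> X T"
  obtains B where "B \<ge> 0" "\<And>t k. 0 \<le> t \<Longrightarrow> t \<le> T \<Longrightarrow> \<bar>X t $ k\<bar> \<le> B"
proof -
  obtain B where B: "B \<ge> 0" "\<And>t. 0 \<le> t \<Longrightarrow> t \<le> T \<Longrightarrow> norm (X t) \<le> B"
    using bounded_on_Icc[of 0 T X] assms unfolding sol_def by blast
  show ?thesis
  proof (rule that[OF B(1)])
    fix t k assume "0 \<le> t" "t \<le> T"
    thus "\<bar>X t $ k\<bar> \<le> B" using B(2) component_le_norm_cart[of "X t" k] by force
  qed
qed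

lemma sol_comp:
  assumes sw: "switching_path \<sigma>" and sol: "sol F \<sigma> X T"
  obtains M where
    "\<And>i. continuous_on {0..T} (\<lambda>s. X s $ i)"
    "\<And>i s. 0 \<le> s \<Longrightarrow> s < T \<Longrightarrow> ((\<lambda>s. X s $ i) has_real_derivative X s $ i * gf i (\<sigma> s) (X s)) (at_right s)"
    "\<And>i s. 0 \<le> s \<Longrightarrow> s < T \<Longrightarrow> \<bar>gf i (\<sigma> s) (X s)\<bar> \<le> M"
proof -
  have Sv: "\<sigma> t \<in> Sset" for t using sw by (simp add: switching_path_def)
  obtain B where B: "B \<ge> 0" "\<And>t k. 0 \<le> t \<Longrightarrow> t \<le> T \<Longrightarrow> \<bar>X t $ k\<bar> \<le> B"
    using sol_bounded[OF sol] by blast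
  show ?thesis
  proof (rule that[of "r + d + 4*Q*B"])
    fix i
    show "continuous_on {0..T} (\<lambda>s. X s $ i)"
      using sol unfolding sol_def by (intro continuous_on_component) auto
  next
    fix i s assume s: "0 \<le> s" "s < T"
    have "(X has_vector_derivative F (\<sigma> s) (X s)) (at_right s)" using sol s unfolding sol_def by auto
    from comp_deriv[OF this, of i]
    show "((\<lambda>s. X s $ i) has_real_derivative X s $ i * gf i (\<sigma> s) (X s)) (at_right s)"
      by (simp add: F_gf)
    show "\<bar>gf i (\<sigma> s) (X s)\<bar> \<le> r + d + 4*Q*B"
      by (rule gf_bnd[OF Sv B(1)]) (use B(2) s in auto)
  qed
qed

lemma sol_orthant:
  assumes sw: "switching_path \<sigma>" and sol: "sol F \<sigma> X T" and t: "0 \<le> t" "t \<le> T"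
  shows "X 0 \<in> orthant \<Longrightarrow> X t \<in> orthant" and "X 0 \<in> orthant_int \<Longrightarrow> X t \<in> orthant_int"
proof -
  obtain M where c: "\<And>i. continuous_on {0..T} (\<lambda>s. X s $ i)"
    and dv: "\<And>i s. 0 \<le> s \<Longrightarrow> s < T \<Longrightarrow> ((\<lambda>s. X s $ i) has_real_derivative X s $ i * gf i (\<sigma> s) (X s)) (at_right s)"
    and bd: "\<And>i s. 0 \<le> s \<Longrightarrow> s < T \<Longrightarrow> \<bar>gf i (\<sigma> s) (X s)\<bar> \<le> M"
    using sol_comp[OF sw sol] by blast
  have p1: "X t $ i = 0" if "X 0 $ i = 0" for i
    using pos1d(1)[of T "\<lambda>s. X s $ i" "\<lambda>s. gf i (\<sigma> s) (X s)" M, OF c dv bd] that t by simp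
  have p2: "X t $ i > 0" if "X 0 $ i > 0" for i
    using pos1d(2)[of T "\<lambda>s. X s $ i" "\<lambda>s. gf i (\<sigma> s) (X s)" M, OF c dv bd] that t by simp
  show "X t \<in> orthant" if "X 0 \<in> orthant"
  proof -
    have "0 \<le> X t $ i" for i
    proof (cases "X 0 $ i = 0")
      case True thus ?thesis using p1[of i] by simp
    next
      case False
      moreover have "0 \<le> X 0 $ i" using that by (simp add: orthant_def)
      ultimately have "X 0 $ i > 0" by linarith
      thus ?thesis using p2[of i] by (simp add: less_imp_le)
    qed
    thus ?thesis by (simp add: orthant_def)
  qed
  show "X t \<in> orthant_int" if "X 0 \<in> orthant_int"
    using p2 that by (simp add: orthant_int_def)
qed

end



context LV
begin

definition "a1 = e1 1 / c1 1 + e1 2 / c1 2"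
definition "a2 = e2 1 / c2 1 + e2 2 / c2 2"
definition "V x = a1 * x$1 + a2 * x$2 + x$3"
definition "A = (a1 + a2) * (r + d)^2 / 4"

lemma a_pos: "a1 > 0" "a2 > 0"
  using coef[of 1] coef[of 2] unfolding a1_def a2_def Sset_def
  by (auto intro!: add_pos_pos divide_pos_pos)

lemma a_ge: assumes "j \<in> Sset" shows "e1 j \<le> a1 * c1 j" "e2 j \<le> a2 * c2 j"
proof -
  have j: "j = 1 \<or> j = 2" using assms by (auto simp: Sset_def)
  have p1: "0 < c1 1" "0 < c2 1" "0 < e1 1" "0 < e2 1" using coef[of 1] by (auto simp: Sset_def)
  have p2: "0 < c1 2" "0 < c2 2" "0 < e1 2" "0 < e2 2" using coef[of 2] by (auto simp: Sset_def)
  have "a1 * c1 1 = e1 1 + e1 2 / c1 2 * c1 1" using p1 by (simp add: a1_def field_simps)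
  moreover have "a1 * c1 2 = e1 1 / c1 1 * c1 2 + e1 2" using p2 by (simp add: a1_def field_simps)
  moreover have "a2 * c2 1 = e2 1 + e2 2 / c2 2 * c2 1" using p1 by (simp add: a2_def field_simps)
  moreover have "a2 * c2 2 = e2 1 / c2 1 * c2 2 + e2 2" using p2 by (simp add: a2_def field_simps)
  moreover have "e1 2 / c1 2 * c1 1 \<ge> 0" "e1 1 / c1 1 * c1 2 \<ge> 0" "e2 2 / c2 2 * c2 1 \<ge> 0" "e2 1 / c2 1 * c2 2 \<ge> 0"
    using p1 p2 by auto
  ultimately show "e1 j \<le> a1 * c1 j" "e2 j \<le> a2 * c2 j" using j by auto
qed

lemma A_nonneg: "A \<ge> 0" using a_pos by (simp add: A_def)

lemma V_nonneg: "x \<in> orthant \<Longrightarrow> V x \<ge> 0"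
  using a_pos by (simp add: V_def orthant_def)

lemma V_comp: assumes "x \<in> orthant" shows "a1 * x$1 \<le> V x" "a2 * x$2 \<le> V x" "x$3 \<le> V x"
  using assms a_pos by (auto simp: V_def orthant_def)

lemma V_ineq:
  assumes x: "x \<in> orthant" and j: "j \<in> Sset"
  shows "a1 * F j x $ 1 + a2 * F j x $ 2 + F j x $ 3 + d * V x \<le> A"
proof -
  define u where "u = x$1"
  define v where "v = x$2"
  define w where "w = x$3"
  have uvw: "u \<ge> 0" "v \<ge> 0" "w \<ge> 0" using x by (auto simp: orthant_def u_def v_def w_def)
  have eq: "a1 * F j x $ 1 + a2 * F j x $ 2 + F j x $ 3 + d * V x =
      a1 * (u * (r + d - u)) + a2 * (v * (r + d - v)) - (a1 * b1 + a2 * b2) * (u * v)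
      + (u * w) * (e1 j - a1 * c1 j) + (v * w) * (e2 j - a2 * c2 j)"
    unfolding F1 F2 F3 V_def u_def[symmetric] v_def[symmetric] w_def[symmetric] by algebra
  have q: "y * (r + d - y) \<le> (r + d)^2 / 4" for y :: real
  proof -
    have "0 \<le> (y - (r + d) / 2)^2" by simp
    moreover have "(y - (r + d) / 2)^2 = (r + d)^2 / 4 - y * (r + d - y)"
      by (simp add: field_simps power2_eq_square)
    ultimately show ?thesis by linarith
  qed
  have t1: "a1 * (u * (r + d - u)) \<le> a1 * ((r + d)^2 / 4)" using a_pos q by (intro mult_left_mono) auto
  have t2: "a2 * (v * (r + d - v)) \<le> a2 * ((r + d)^2 / 4)" using a_pos q by (intro mult_left_mono) auto
  have t3: "(a1 * b1 + a2 * b2) * (u * v) \<ge> 0" using a_pos b1 b2 uvw by simp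
  have t4: "(u * w) * (e1 j - a1 * c1 j) \<le> 0" using a_ge[OF j] uvw by (intro mult_nonneg_nonpos) auto
  have t5: "(v * w) * (e2 j - a2 * c2 j) \<le> 0" using a_ge[OF j] uvw by (intro mult_nonneg_nonpos) auto
  have "A = a1 * ((r + d)^2 / 4) + a2 * ((r + d)^2 / 4)" by (simp add: A_def algebra_simps)
  thus ?thesis unfolding eq using t1 t2 t3 t4 t5 by linarith
qed

lemma V_bound:
  assumes sw: "switching_path \<sigma>" and sol: "sol F \<sigma> X T" and X0: "X 0 \<in> orthant" and t: "0 \<le> t" "t \<le> T"
  shows "V (X t) \<le> A / d + (V (X 0) - A / d) * exp (- (d * t))"
proof -
  have Sv: "\<sigma> s \<in> Sset" for s using sw by (simp add: switching_path_def)
  define \<phi> where "\<phi> s = (V (X s) - A / d) * exp (d * s)" for s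
  define V' where "V' s = a1 * F (\<sigma> s) (X s) $ 1 + a2 * F (\<sigma> s) (X s) $ 2 + F (\<sigma> s) (X s) $ 3" for s
  define \<phi>' where "\<phi>' s = V' s * exp (d * s) + (V (X s) - A / d) * (exp (d * s) * (d * 1))" for s
  have "\<phi> t \<le> \<phi> 0"
  proof (rule mvi_right[of 0 t \<phi> \<phi>'])
    show "continuous_on {0..t} \<phi>" unfolding \<phi>_def V_def
      using continuous_on_subset[OF sol[unfolded sol_def, THEN conjunct1], of "{0..t}"] t
      by (auto intro!: continuous_intros)
  next
    fix s assume s: "0 \<le> s" "s < t"
    have dX: "(X has_vector_derivative F (\<sigma> s) (X s)) (at_right s)" using sol s t unfolding sol_def by auto
    have d1: "((\<lambda>s. X s $ 1) has_real_derivative F (\<sigma> s) (X s) $ 1) (at_right s)" by (rule comp_deriv[OF dX])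
    have d2: "((\<lambda>s. X s $ 2) has_real_derivative F (\<sigma> s) (X s) $ 2) (at_right s)" by (rule comp_deriv[OF dX])
    have d3: "((\<lambda>s. X s $ 3) has_real_derivative F (\<sigma> s) (X s) $ 3) (at_right s)" by (rule comp_deriv[OF dX])
    have dV: "((\<lambda>s. V (X s)) has_real_derivative V' s) (at_right s)"
      unfolding V_def V'_def
      by (rule derivative_eq_intros d1 d2 d3 refl | simp)+
    show "(\<phi> has_real_derivative \<phi>' s) (at_right s)"
      unfolding \<phi>_def \<phi>'_def
      by (rule derivative_eq_intros dV refl | simp)+
    have Xs: "X s \<in> orthant" using sol_orthant(1)[OF sw sol _ _ X0] s t by simp
    have "V' s + d * V (X s) \<le> A" using V_ineq[OF Xs Sv[of s]] by (simp add: V'_def)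
    moreover have "(V (X s) - A / d) * d = d * V (X s) - A" using d by (simp add: field_simps)
    ultimately have "V' s + (V (X s) - A / d) * d \<le> 0" by linarith
    hence "(V' s + (V (X s) - A / d) * d) * exp (d * s) \<le> 0" by (simp add: mult_nonpos_nonneg)
    moreover have "\<phi>' s = (V' s + (V (X s) - A / d) * d) * exp (d * s)"
      unfolding \<phi>'_def by (simp add: algebra_simps)
    ultimately show "\<phi>' s \<le> 0" by simp
  qed (use t in auto)
  hence "(V (X t) - A / d) * exp (d * t) \<le> V (X 0) - A / d" by (simp add: \<phi>_def)
  hence "(V (X t) - A / d) * exp (d * t) * exp (- (d * t)) \<le> (V (X 0) - A / d) * exp (- (d * t))"
    by (intro mult_right_mono) auto
  hence "V (X t) - A / d \<le> (V (X 0) - A / d) * exp (- (d * t))"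
    by (simp add: mult.assoc exp_minus_inverse)
  thus ?thesis by simp
qed

lemma V_max:
  assumes sw: "switching_path \<sigma>" and sol: "sol F \<sigma> X T" and X0: "X 0 \<in> orthant" and t: "0 \<le> t" "t \<le> T"
  shows "V (X t) \<le> max (V (X 0)) (A / d)"
proof -
  have b: "V (X t) \<le> A / d + (V (X 0) - A / d) * exp (- (d * t))" by (rule V_bound[OF assms])
  have e: "exp (- (d * t)) \<le> 1" "exp (- (d * t)) > 0" using d t by auto
  show ?thesis
  proof (cases "V (X 0) \<ge> A / d")
    case True
    hence "(V (X 0) - A / d) * exp (- (d * t)) \<le> (V (X 0) - A / d) * 1"
      using e by (intro mult_left_mono) auto
    thus ?thesis using b by auto
  next
    case False
    hence "(V (X 0) - A / d) * exp (- (d * t)) \<le> 0" using e by (intro mult_nonpos_nonneg) auto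
    thus ?thesis using b by auto
  qed
qed

end



definition cl :: "real \<Rightarrow> real^3 \<Rightarrow> real^3" where
  "cl B x = (\<chi> i. max (- B) (min B (x $ i)))"

lemma cl_bnd: "0 \<le> B \<Longrightarrow> \<bar>cl B x $ k\<bar> \<le> B"
  by (simp add: cl_def)

lemma cl_lip: "norm (cl B x - cl B y) \<le> norm (x - y)"
proof (rule norm_le_componentwise_cart)
  fix i
  show "norm ((cl B x - cl B y) $ i) \<le> norm ((x - y) $ i)"
    by (simp add: cl_def max_def min_def)
qed

lemma cl_id: "(\<And>k. \<bar>x $ k\<bar> \<le> B) \<Longrightarrow> cl B x = x"
proof -
  assume h: "\<And>k. \<bar>x $ k\<bar> \<le> B"
  have "max (- B) (min B (x $ i)) = x $ i" for i using h[of i] by (simp add: max_def min_def) linarith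
  thus ?thesis by (simp add: cl_def vec_eq_iff)
qed

lemma sol_mono: "sol G \<sigma> X T \<Longrightarrow> T' \<le> T \<Longrightarrow> sol G \<sigma> X T'"
  unfolding sol_def by (auto intro: continuous_on_subset)

context LV
begin

lemma F_lip_ex:
  assumes sw: "switching_path \<sigma>" and B: "B \<ge> 0"
  shows "\<exists>L\<ge>0. \<forall>t x y. (\<forall>k. \<bar>x$k\<bar> \<le> B) \<longrightarrow> (\<forall>k. \<bar>y$k\<bar> \<le> B) \<longrightarrow>
       norm (F (\<sigma> t) x - F (\<sigma> t) y) \<le> L * norm (x - y)"
proof (intro exI[of _ "9 * (r + d + 4*Q*B)"] conjI allI impI)
  show "0 \<le> 9 * (r + d + 4*Q*B)" using r d Q_pos B by simp
  fix t and x y :: "real^3" assume "\<forall>k. \<bar>x$k\<bar> \<le> B" "\<forall>k. \<bar>y$k\<bar> \<le> B"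
  thus "norm (F (\<sigma> t) x - F (\<sigma> t) y) \<le> 9 * (r + d + 4*Q*B) * norm (x - y)"
    using F_lip[of "\<sigma> t" B x y] sw B by (simp add: switching_path_def)
qed

lemma unique_F:
  assumes sw: "switching_path \<sigma>" and X: "sol F \<sigma> X T" and Y: "sol F \<sigma> Y T" and "X 0 = Y 0"
    and "0 \<le> t" "t \<le> T"
  shows "X t = Y t"
  by (rule sol_unique[OF X Y assms(4) F_lip_ex[OF sw] assms(5,6)])

lemma exist_F:
  assumes sw: "switching_path \<sigma>" and x0: "x0 \<in> orthant" and T: "T \<ge> 0"
  shows "\<exists>X. sol F \<sigma> X T \<and> X 0 = x0"
proof -
  have Sv: "\<sigma> t \<in> Sset" for t using sw by (simp add: switching_path_def)
  define R where "R = max (V x0) (A / d)"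
  have R0: "R \<ge> 0" using V_nonneg[OF x0] by (simp add: R_def)
  define B where "B = R / a1 + R / a2 + R + 1"
  have B0: "B \<ge> 1" using R0 a_pos by (simp add: B_def)
  have inB: "\<bar>x $ k\<bar> < B" if x: "x \<in> orthant" "V x \<le> R" for x k
  proof -
    have c: "a1 * x$1 \<le> R" "a2 * x$2 \<le> R" "x$3 \<le> R" using V_comp[OF x(1)] x(2) by auto
    have "x$1 \<le> R / a1" using c a_pos by (simp add: field_simps)
    moreover have "x$2 \<le> R / a2" using c a_pos by (simp add: field_simps)
    moreover have "R / a1 \<ge> 0" "R / a2 \<ge> 0" using R0 a_pos by auto
    moreover have "0 \<le> x$1" "0 \<le> x$2" "0 \<le> x$3" using x(1) by (auto simp: orthant_def)
    moreover have "k = 1 \<or> k = 2 \<or> k = 3" using exhaust_3 by blast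
    ultimately show ?thesis using c unfolding B_def by auto
  qed
  define G where "G j x = F j (cl B x)" for j x
  define L where "L = 9 * (r + d + 4*Q*B)"
  have L0: "L \<ge> 0" using r d Q_pos B0 by (simp add: L_def)
  have Glip: "norm (G j x - G j y) \<le> L * norm (x - y)" if j: "j \<in> Sset" for j x y
  proof -
    have "norm (G j x - G j y) \<le> L * norm (cl B x - cl B y)"
      unfolding G_def L_def using B0 by (intro F_lip[OF j]) (auto intro: cl_bnd)
    also have "\<dots> \<le> L * norm (x - y)" using L0 cl_lip by (intro mult_left_mono) auto
    finally show ?thesis .
  qed
  obtain Y where Y: "sol G \<sigma> Y T" "Y 0 = x0" using exist_glob[of \<sigma> T L G x0, OF sw T L0 Glip] by blast
  have Yc: "continuous_on {0..T} Y" using Y(1) by (simp add: sol_def)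
  have key: "\<forall>k. \<bar>Y t $ k\<bar> < B" if t: "0 \<le> t" "t \<le> T" for t
  proof (rule ccontr)
    assume "\<not> (\<forall>k. \<bar>Y t $ k\<bar> < B)"
    define S where "S = {s \<in> {0..T}. \<exists>k. B \<le> \<bar>Y s $ k\<bar>}"
    have tS: "t \<in> S" using t \<open>\<not> (\<forall>k. \<bar>Y t $ k\<bar> < B)\<close> by (auto simp: S_def not_less)
    have Seq: "S = (\<Union>k\<in>UNIV. {s \<in> {0..T}. B \<le> \<bar>Y s $ k\<bar>})" by (auto simp: S_def)
    have clS: "closed S" unfolding Seq
      by (intro closed_UN finite_UNIV ballI continuous_on_closed_Collect_le continuous_intros Yc) auto
    have bdd: "bdd_below S" by (auto simp: S_def bdd_below_def)
    define ts where "ts = Inf S"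
    have tsS: "ts \<in> S" unfolding ts_def using closed_contains_Inf[OF _ bdd clS] tS by blast
    hence ts: "0 \<le> ts" "ts \<le> T" by (auto simp: S_def)
    have before: "\<bar>Y s $ k\<bar> < B" if s: "0 \<le> s" "s < ts" for s k
    proof (rule ccontr)
      assume "\<not> \<bar>Y s $ k\<bar> < B"
      hence "s \<in> S" using s ts by (auto simp: S_def not_less)
      hence "ts \<le> s" unfolding ts_def using bdd by (rule cInf_lower)
      with s show False by simp
    qed
    have solF: "sol F \<sigma> Y ts"
      unfolding sol_def
    proof (intro conjI allI impI)
      show "continuous_on {0..ts} Y" using continuous_on_subset[OF Yc] ts by auto
      fix s assume s: "0 \<le> s \<and> s < ts"
      have "(Y has_vector_derivative G (\<sigma> s) (Y s)) (at_right s)" using Y(1) s ts by (auto simp: sol_def)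
      moreover have "cl B (Y s) = Y s" by (rule cl_id) (use before[of s] s in \<open>auto intro: less_imp_le\<close>)
      ultimately show "(Y has_vector_derivative F (\<sigma> s) (Y s)) (at_right s)" by (simp add: G_def)
    qed
    have Yo: "Y ts \<in> orthant" using sol_orthant(1)[OF sw solF _ _] Y(2) x0 ts by simp
    have "V (Y ts) \<le> R" using V_max[OF sw solF _ _ order_refl] Y(2) x0 ts by (simp add: R_def)
    hence lt: "\<bar>Y ts $ k\<bar> < B" for k using inB[OF Yo] by auto
    from tsS obtain k where "B \<le> \<bar>Y ts $ k\<bar>" by (auto simp: S_def)
    with lt[of k] show False by linarith
  qed
  have "sol F \<sigma> Y T"
    unfolding sol_def
  proof (intro conjI allI impI)
    show "continuous_on {0..T} Y" by (rule Yc)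
    fix s assume s: "0 \<le> s \<and> s < T"
    have "(Y has_vector_derivative G (\<sigma> s) (Y s)) (at_right s)" using Y(1) s by (auto simp: sol_def)
    moreover have "cl B (Y s) = Y s" by (rule cl_id) (use key[of s] s in \<open>auto intro: less_imp_le\<close>)
    ultimately show "(Y has_vector_derivative F (\<sigma> s) (Y s)) (at_right s)" by (simp add: G_def)
  qed
  thus ?thesis using Y(2) by blast
qed

end



context LV
begin

abbreviation "solv \<equiv> solves r d b1 b2 c1 c2 e1 e2"

lemma solves_sol: "solv \<sigma> X \<Longrightarrow> sol F \<sigma> X T"
  unfolding solves_def sol_def
  by (auto intro: continuous_on_subset simp: at_within_Ici_at_right)

lemma global_exist:
  assumes sw: "switching_path \<sigma>" and x0: "x0 \<in> orthant"
  shows "\<exists>X. X 0 = x0 \<and> solv \<sigma> X \<and> (\<forall>Y. Y 0 = x0 \<and> solv \<sigma> Y \<longrightarrow> (\<forall>t\<ge>0. Y t = X t))"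
proof -
  have ex: "\<forall>n::nat. \<exists>X. sol F \<sigma> X (real n) \<and> X 0 = x0"
    using exist_F[OF sw x0] by simp
  obtain Xs where Xs: "\<forall>n. sol F \<sigma> (Xs n) (real n) \<and> Xs n 0 = x0"
    using choice[OF ex] by blast
  have cons: "Xs m s = Xs n s" if "0 \<le> s" "s \<le> real m" "s \<le> real n" for m n s
  proof (rule unique_F[OF sw _ _ _ \<open>0 \<le> s\<close> order_refl])
    show "sol F \<sigma> (Xs m) s" using Xs sol_mono that by blast
    show "sol F \<sigma> (Xs n) s" using Xs sol_mono that by blast
    show "Xs m 0 = Xs n 0" using Xs by simp
  qed
  define N where "N t = nat \<lceil>t\<rceil> + 1" for t :: real
  have Nt: "t < real (N t)" for t
  proof -
    have "t \<le> real (nat \<lceil>t\<rceil>)" by linarith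
    thus ?thesis by (simp add: N_def)
  qed
  define X where "X t = Xs (N t) t" for t
  have XE: "X t = Xs n t" if "0 \<le> t" "t \<le> real n" for t n
    unfolding X_def using cons[of t "N t" n] Nt[of t] that by simp
  have X0: "X 0 = x0" using XE[of 0 0] Xs by simp
  have Xc: "continuous_on {0..} X"
    unfolding continuous_on_eq_continuous_within
  proof
    fix t :: real assume t: "t \<in> {0..}"
    define n where "n = N t"
    have tn: "t < real n" using Nt by (simp add: n_def)
    have "continuous_on {0..real n} X"
      by (rule continuous_on_eq[of _ "Xs n"]) (use Xs XE in \<open>auto simp: sol_def\<close>)
    hence "continuous (at t within {0..real n}) X"
      using t tn by (simp add: continuous_on_eq_continuous_within)
    moreover have "at t within {0..} = at t within {0..real n}"
      by (rule at_within_nhd[of t "{..<real n}"]) (use tn in auto)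
    ultimately show "continuous (at t within {0..}) X" by simp
  qed
  have Xd: "(X has_vector_derivative F (\<sigma> t) (X t)) (at t within {t..})" if t: "t \<ge> 0" for t
  proof -
    define n where "n = N t"
    have tn: "t < real n" using Nt by (simp add: n_def)
    have "(Xs n has_vector_derivative F (\<sigma> t) (Xs n t)) (at t within {t..})"
      using Xs t tn by (auto simp: sol_def at_within_Ici_at_right)
    hence d: "(Xs n has_vector_derivative F (\<sigma> t) (X t)) (at t within {t..})"
      using XE[of t n] t tn by simp
    show ?thesis
    proof (rule has_vector_derivative_transform_within[OF d])
      show "0 < real n - t" using tn by simp
      show "t \<in> {t..}" by simp
      fix x' assume "x' \<in> {t..}" "dist x' t < real n - t"
      thus "Xs n x' = X x'" using XE[of x' n] t by (auto simp: dist_real_def)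
    qed
  qed
  have solX: "solv \<sigma> X" unfolding solves_def using Xc Xd by auto
  have uniq: "\<forall>t\<ge>0. Y t = X t" if Y: "Y 0 = x0" "solv \<sigma> Y" for Y
  proof (intro allI impI)
    fix t :: real assume t: "t \<ge> 0"
    define n where "n = N t"
    have tn: "t < real n" using Nt by (simp add: n_def)
    have "Y t = Xs n t"
      by (rule unique_F[OF sw solves_sol[OF Y(2)]]) (use Xs Y t tn in auto)
    thus "Y t = X t" using XE[of t n] t tn by simp
  qed
  show ?thesis using X0 solX uniq by blast
qed

lemma absorbing:
  "\<exists>K. compact K \<and> K \<subseteq> orthant \<and>
     (\<forall>\<sigma> X. switching_path \<sigma> \<and> X 0 \<in> orthant \<and> solv \<sigma> X \<longrightarrow> (\<exists>T\<ge>0. \<forall>t\<ge>T. X t \<in> K))"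
proof -
  define C where "C = A / d + 1"
  have C0: "C \<ge> 1" using A_nonneg d by (simp add: C_def)
  define K where "K = {x :: real^3. (\<forall>i. 0 \<le> x $ i) \<and> V x \<le> C}"
  have Ko: "K \<subseteq> orthant" by (auto simp: K_def orthant_def)
  have clK: "closed K" unfolding K_def V_def
    by (intro closed_Collect_conj closed_Collect_all closed_Collect_le continuous_intros)
  have bK: "bounded K"
  proof -
    have "norm x \<le> C / a1 + C / a2 + C" if x: "x \<in> K" for x
    proof -
      have xo: "x \<in> orthant" and xV: "V x \<le> C" using x Ko by (auto simp: K_def)
      have c: "a1 * x$1 \<le> C" "a2 * x$2 \<le> C" "x$3 \<le> C" using V_comp[OF xo] xV by auto
      have "x$1 \<le> C / a1" using c a_pos by (simp add: field_simps)
      moreover have "x$2 \<le> C / a2" using c a_pos by (simp add: field_simps)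
      moreover have "0 \<le> x$1" "0 \<le> x$2" "0 \<le> x$3" using xo by (auto simp: orthant_def)
      moreover have "norm x \<le> \<bar>x$1\<bar> + \<bar>x$2\<bar> + \<bar>x$3\<bar>" using norm_le_l1_cart[of x] by (simp add: sum_3)
      ultimately show ?thesis using c by linarith
    qed
    thus ?thesis unfolding bounded_iff by blast
  qed
  have cK: "compact K" using clK bK by (simp add: compact_eq_bounded_closed)
  have enter: "\<exists>T\<ge>0. \<forall>t\<ge>T. X t \<in> K" if sw: "switching_path \<sigma>" and X0: "X 0 \<in> orthant" and X: "solv \<sigma> X" for \<sigma> X
  proof -
    define V0 where "V0 = V (X 0)"
    have V0: "V0 \<ge> 0" using V_nonneg[OF X0] by (simp add: V0_def)
    show ?thesis
    proof (intro exI[of _ "V0 / d"] conjI allI impI)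
      show "0 \<le> V0 / d" using V0 d by simp
      fix t assume t: "V0 / d \<le> t"
      hence t0: "t \<ge> 0" using V0 d by (meson order_trans divide_nonneg_pos)
      have solt: "sol F \<sigma> X t" by (rule solves_sol[OF X])
      have Xt: "X t \<in> orthant" using sol_orthant(1)[OF sw solt t0 order_refl X0] .
      have Vb: "V (X t) \<le> A / d + (V0 - A / d) * exp (- (d * t))"
        using V_bound[OF sw solt X0 t0 order_refl] by (simp add: V0_def)
      have e: "exp (- (d * t)) > 0" by simp
      have Ad: "A / d \<ge> 0" using A_nonneg d by simp
      have "(V0 - A / d) * exp (- (d * t)) \<le> V0 * exp (- (d * t))"
        using Ad e by (intro mult_right_mono) auto
      also have "\<dots> = V0 / exp (d * t)" by (simp add: exp_minus field_simps)
      also have "\<dots> \<le> 1"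
      proof -
        have "V0 \<le> d * t" using t d by (simp add: field_simps)
        also have "d * t < exp (d * t)" using exp_ge_add_one_self[of "d * t"] by linarith
        finally show ?thesis by simp
      qed
      finally have "V (X t) \<le> C" using Vb by (simp add: C_def)
      thus "X t \<in> K" using Xt by (simp add: K_def orthant_def)
    qed
  qed
  show ?thesis using cK Ko enter by blast
qed

lemma interior_inv:
  assumes "switching_path \<sigma>" "X 0 \<in> orthant_int" "solv \<sigma> X" "t \<ge> 0"
  shows "X t \<in> orthant_int"
  using sol_orthant(2)[OF assms(1) solves_sol[OF assms(3)] assms(4) order_refl assms(2)] .

end

theorem theorem2p1:
  fixes r d b1 b2 :: real and c1 c2 e1 e2 :: "nat \<Rightarrow> real"
  assumes "r > 0" "d > 0" "b1 > 0" "b2 > 0"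
    and "\<forall>j\<in>Sset. c1 j > 0 \<and> c2 j > 0 \<and> e1 j > 0 \<and> e2 j > 0"
  shows "(\<forall>\<sigma> x0. switching_path \<sigma> \<longrightarrow> x0 \<in> orthant \<longrightarrow>
            (\<exists>X. X 0 = x0 \<and> solves r d b1 b2 c1 c2 e1 e2 \<sigma> X \<and>
                 (\<forall>Y. Y 0 = x0 \<and> solves r d b1 b2 c1 c2 e1 e2 \<sigma> Y \<longrightarrow> (\<forall>t\<ge>0. Y t = X t))))
       \<and> (\<exists>K. compact K \<and> K \<subseteq> orthant \<and>
            (\<forall>\<sigma> X. switching_path \<sigma> \<and> X 0 \<in> orthant \<and> solves r d b1 b2 c1 c2 e1 e2 \<sigma> X \<longrightarrow>
               (\<exists>T\<ge>0. \<forall>t\<ge>T. X t \<in> K)))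
       \<and> (\<forall>\<sigma> X. switching_path \<sigma> \<and> X 0 \<in> orthant_int \<and> solves r d b1 b2 c1 c2 e1 e2 \<sigma> X \<longrightarrow>
            (\<forall>t\<ge>0. X t \<in> orthant_int))"
proof -
  interpret LV r d b1 b2 c1 c2 e1 e2
    by unfold_locales (use assms in auto)
  show ?thesis using global_exist absorbing interior_inv by blast
qed


end
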